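(* Let $n\ge 2$ and let $q>3$ be a prime power, and let $\xi$ be a generator of ${\rm GF}(q)^\times$. Then ${\rm SL}(n,q)$ is generated by $h_1(\xi)h_2(\xi^{-1})=\mathrm{diag}(\xi,\xi^{-1},1,\dots,1)$ and $x_{12}(1)\,w$, where $x_{12}(1)=I+E_{12}$ and $w$ is the $n\times n$ matrix with entry $1$ in position $(1,n)$, entry $-1$ in positions $(i+1,i)$ for $1\le i\le n-1$, and $0$ elsewhere.
   Context: $E_{ij}$ denotes the square matrix with $1$ in position $(i,j)$ and $0$ elsewhere; $x_{ij}(\alpha)=I+\alpha E_{ij}$ for $i\ne j$; $h_i(\alpha)$ is the identity matrix with its $i$-th diagonal entry replaced by $\alpha$. *)

theory Defs
  imports "Jordan_Normal_Form.Determinant"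
begin

text \<open>Matrices are 0-indexed: paper position (i,j) corresponds to index (i-1,j-1).\<close>

inductive_set gen_mat :: "nat \<Rightarrow> 'a::field mat set \<Rightarrow> 'a mat set"
  for n :: nat and S :: "'a mat set" where
  gen_one: "1\<^sub>m n \<in> gen_mat n S"
| gen_mult: "A \<in> gen_mat n S \<Longrightarrow> B \<in> S \<Longrightarrow> A * B \<in> gen_mat n S"
| gen_mult_inv: "A \<in> gen_mat n S \<Longrightarrow> B \<in> S \<Longrightarrow> C \<in> carrier_mat n n \<Longrightarrow>
     B * C = 1\<^sub>m n \<Longrightarrow> C * B = 1\<^sub>m n \<Longrightarrow> A * C \<in> gen_mat n S"

definition SL :: "nat \<Rightarrow> 'a::field mat set" where
  "SL n = {A \<in> carrier_mat n n. det A = 1}"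

definition E_mat :: "nat \<Rightarrow> nat \<Rightarrow> nat \<Rightarrow> 'a::field mat" where
  "E_mat n i j = mat n n (\<lambda>(k,l). if k = i \<and> l = j then 1 else 0)"

definition x_mat :: "nat \<Rightarrow> nat \<Rightarrow> nat \<Rightarrow> 'a::field \<Rightarrow> 'a mat" where
  "x_mat n i j a = 1\<^sub>m n + a \<cdot>\<^sub>m E_mat n i j"

definition h_mat :: "nat \<Rightarrow> nat \<Rightarrow> 'a::field \<Rightarrow> 'a mat" where
  "h_mat n i a = mat n n (\<lambda>(k,l). if k = l then (if k = i then a else 1) else 0)"

definition w_mat :: "nat \<Rightarrow> 'a::field mat" where
  "w_mat n = mat n n (\<lambda>(k,l). if k = 0 \<and> l = n - 1 then 1
                              else if k = l + 1 then -1 else 0)"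

end

theory Submission
  imports Defs
begin



lemma x_mat_dim[simp]: "dim_row (x_mat n i j a) = n" "dim_col (x_mat n i j a) = n"
  unfolding x_mat_def E_mat_def by auto

lemma x_mat_carrier[simp]: "x_mat n i j a \<in> carrier_mat n n"
  unfolding x_mat_def E_mat_def by auto

lemma x_mat_index: "r < n \<Longrightarrow> c < n \<Longrightarrow>
  x_mat n i j a $$ (r,c) = (if r = c then 1 else 0) + (if r = i \<and> c = j then a else 0)"
  unfolding x_mat_def E_mat_def by auto

lemma x_mat_addrow: "x_mat n i j a = addrow_mat n a i j"
  by (rule eq_matI, auto simp: x_mat_index)

lemma det_x_mat: "i \<noteq> j \<Longrightarrow> det (x_mat n i j a) = 1"
  by (simp add: x_mat_addrow det_addrow_mat)

lemma x_mult_index: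
  assumes B: "B \<in> carrier_mat n n" and r: "r < n" and c: "c < n" and j: "j < n"
  shows "(x_mat n i j a * B) $$ (r,c) = B $$ (r,c) + (if r = i then a * B $$ (j,c) else 0)"
proof -
  have "(x_mat n i j a * B) $$ (r,c) = (\<Sum>m\<in>{0..<n}. x_mat n i j a $$ (r,m) * B $$ (m,c))"
    using B r c by (simp add: scalar_prod_def row_def col_def)
  also have "\<dots> = (\<Sum>m\<in>{0..<n}. (if r = m then B $$ (m,c) else 0) + (if r = i \<and> m = j then a * B $$ (m,c) else 0))"
    by (rule sum.cong, auto simp: x_mat_index r distrib_right)
  also have "\<dots> = B $$ (r,c) + (if r = i then a * B $$ (j,c) else 0)"
    using r j by (simp add: sum.distrib)
  finally show ?thesis .
qed

lemma mult_x_index: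
  assumes B: "B \<in> carrier_mat n n" and r: "r < n" and c: "c < n" and i: "i < n"
  shows "(B * x_mat n i j a) $$ (r,c) = B $$ (r,c) + (if c = j then a * B $$ (r,i) else 0)"
proof -
  have "(B * x_mat n i j a) $$ (r,c) = (\<Sum>m\<in>{0..<n}. B $$ (r,m) * x_mat n i j a $$ (m,c))"
    using B r c by (simp add: scalar_prod_def row_def col_def)
  also have "\<dots> = (\<Sum>m\<in>{0..<n}. (if m = c then B $$ (r,m) else 0) + (if m = i \<and> c = j then a * B $$ (r,m) else 0))"
    by (rule sum.cong, auto simp: x_mat_index c distrib_left)
  also have "\<dots> = B $$ (r,c) + (if c = j then a * B $$ (r,i) else 0)"
    using c i by (simp add: sum.distrib)
  finally show ?thesis .
qed




lemma x_inv: "i \<noteq> j \<Longrightarrow> i < n \<Longrightarrow> j < n \<Longrightarrow> x_mat n i j (-a) * x_mat n i j a = 1\<^sub>m n"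
  by (rule eq_matI, auto simp del: index_mult_mat(1) simp: x_mult_index x_mat_index)

definition Good :: "nat \<Rightarrow> nat \<Rightarrow> 'a::field mat \<Rightarrow> bool" where
 "Good n k A \<longleftrightarrow> A \<in> carrier_mat n n \<and> det A = 1 \<and>
    (\<forall>i<n. \<forall>j<n. (i<k \<or> j<k) \<longrightarrow> A $$ (i,j) = (if i=j then 1 else 0))"

lemma det_zero_col: assumes A: "(A::'a::field mat) \<in> carrier_mat n n" and j: "j < n"
  and z: "\<forall>i<n. A $$ (i,j) = 0" shows "det A = 0"
  using laplace_expansion_column[OF A j] z by simp

context
  fixes G :: "'a::field mat set" and n :: nat
  assumes sub: "G \<subseteq> carrier_mat n n"
  and one: "1\<^sub>m n \<in> G"
  and mult: "\<And>A B. A\<in>G \<Longrightarrow> B\<in>G \<Longrightarrow> A*B \<in> G"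
  and xs: "\<And>i j a. i<n \<Longrightarrow> j<n \<Longrightarrow> i\<noteq>j \<Longrightarrow> x_mat n i j a \<in> G"
begin

lemma cancel_x_left: assumes "x_mat n i j a * A \<in> G" "A \<in> carrier_mat n n" "i<n" "j<n" "i\<noteq>j"
  shows "A \<in> G"
proof -
  have "A = x_mat n i j (-a) * (x_mat n i j a * A)"
    using assms x_inv[of i j n a] by (simp add: assoc_mult_mat[symmetric, of _ n n _ n _ n])
  thus ?thesis using assms mult xs by metis
qed

lemma cancel_x_right: assumes "A * x_mat n i j a \<in> G" "A \<in> carrier_mat n n" "i<n" "j<n" "i\<noteq>j"
  shows "A \<in> G"
proof -
  have "A = (A * x_mat n i j a) * x_mat n i j (-a)"
    using assms x_inv[of i j n "-a"] by (simp add: assoc_mult_mat[of _ n n _ n _ n])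
  thus ?thesis using assms mult xs by metis
qed

lemma det_xA: "A \<in> carrier_mat n n \<Longrightarrow> i \<noteq> j \<Longrightarrow> det (x_mat n i j a * A) = det A"
  by (simp add: det_mult[of _ n] det_x_mat)

lemma det_Ax: "A \<in> carrier_mat n n \<Longrightarrow> i \<noteq> j \<Longrightarrow> det (A * x_mat n i j a) = det A"
  by (simp add: det_mult[of _ n] det_x_mat)

lemma good_row:
  assumes k: "k+1<n" and IH: "\<And>B. Good n (k+1) B \<Longrightarrow> B \<in> G"
  shows "Good n k A \<Longrightarrow> (\<forall>r<n. A$$(r,k) = (if r=k then 1 else 0)) \<Longrightarrow>
     (\<forall>c. k+d<c \<longrightarrow> c<n \<longrightarrow> A$$(k,c) = 0) \<Longrightarrow> A \<in> G"
proof (induction d arbitrary: A)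
  case 0
  have "Good n (k+1) A" unfolding Good_def
  proof (intro conjI allI impI)
    fix i j assume ij: "i < n" "j < n" "i < k+1 \<or> j < k+1"
    show "A $$ (i,j) = (if i = j then 1 else 0)"
    proof (cases "i < k \<or> j < k")
      case True then show ?thesis using 0(1) ij unfolding Good_def by blast
    next
      case False
      then have "i = k \<or> j = k" using ij by auto
      then show ?thesis using 0(2,3) ij False by (cases "j = k") auto
    qed
  qed (insert 0(1), auto simp: Good_def)
  then show ?case by (rule IH)
next
  case (Suc d)
  show ?case
  proof (cases "k+d+1 < n")
    case False
    show ?thesis by (rule Suc.IH[OF Suc.prems(1,2)], insert Suc.prems(3) False, auto)
  next
    case True
    define c0 where "c0 = k+d+1"
    define B where "B = A * x_mat n k c0 (- A$$(k,c0))"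
    have A: "A \<in> carrier_mat n n" using Suc.prems unfolding Good_def by auto
    have Bi: "r<n \<Longrightarrow> c<n \<Longrightarrow> B $$ (r,c) = A $$ (r,c) + (if c = c0 then - A$$(k,c0) * A$$(r,k) else 0)" for r c
      unfolding B_def using A k by (simp del: index_mult_mat(1) add: mult_x_index)
    have B: "B \<in> carrier_mat n n" unfolding B_def using A by (auto intro!: mult_carrier_mat)
    have "B \<in> G"
    proof (rule Suc.IH)
      show "Good n k B" unfolding Good_def
      proof (intro conjI allI impI)
        show "det B = 1" using Suc.prems(1) A unfolding B_def Good_def using k c0_def by (simp add: det_Ax)
      qed (insert Suc.prems(1,2) B, auto simp: Bi c0_def Good_def)
      show "\<forall>r<n. B $$ (r, k) = (if r = k then 1 else 0)" using Suc.prems(2) k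
        by (auto simp: Bi c0_def)
      show "\<forall>c. k + d < c \<longrightarrow> c < n \<longrightarrow> B $$ (k, c) = 0" using Suc.prems(2,3) k
        by (auto simp: Bi c0_def)
    qed
    then show ?thesis unfolding B_def using A True k c0_def
      by (intro cancel_x_right[of A k c0 "- A$$(k,c0)"]) auto
  qed
qed

lemma good_col:
  assumes k: "k+1<n" and IH: "\<And>B. Good n (k+1) B \<Longrightarrow> B \<in> G"
  shows "Good n k A \<Longrightarrow> A$$(k,k) = 1 \<Longrightarrow>
     (\<forall>r. k+d<r \<longrightarrow> r<n \<longrightarrow> A$$(r,k) = 0) \<Longrightarrow> A \<in> G"
proof (induction d arbitrary: A)
  case 0
  show ?case
  proof (rule good_row[OF k IH 0(1), of n])
    show "\<forall>r<n. A $$ (r, k) = (if r = k then 1 else 0)"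
    proof (intro allI impI)
      fix r assume r: "r < n"
      show "A $$ (r, k) = (if r = k then 1 else 0)"
      proof (cases "r < k")
        case True then show ?thesis using 0(1) r k unfolding Good_def by auto
      next
        case False then show ?thesis using 0(2,3) r by (cases "r = k") auto
      qed
    qed
  qed auto
next
  case (Suc d)
  show ?case
  proof (cases "k+d+1 < n")
    case False
    show ?thesis by (rule Suc.IH[OF Suc.prems(1,2)], insert Suc.prems(3) False, auto)
  next
    case True
    define r0 where "r0 = k+d+1"
    define B where "B = x_mat n r0 k (- A$$(r0,k)) * A"
    have A: "A \<in> carrier_mat n n" using Suc.prems unfolding Good_def by auto
    have Bi: "r<n \<Longrightarrow> c<n \<Longrightarrow> B $$ (r,c) = A $$ (r,c) + (if r = r0 then - A$$(r0,k) * A$$(k,c) else 0)" for r c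
      unfolding B_def using A k by (simp del: index_mult_mat(1) add: x_mult_index)
    have B: "B \<in> carrier_mat n n" unfolding B_def using A by (auto intro!: mult_carrier_mat)
    have "B \<in> G"
    proof (rule Suc.IH)
      show "Good n k B" unfolding Good_def
      proof (intro conjI allI impI)
        show "det B = 1" using Suc.prems(1) A unfolding B_def Good_def using k r0_def by (simp add: det_xA)
      qed (insert Suc.prems(1) B k, auto simp: Bi r0_def Good_def)
      show "B $$ (k, k) = 1" using Suc.prems(2) k by (auto simp: Bi r0_def)
      show "\<forall>r. k + d < r \<longrightarrow> r < n \<longrightarrow> B $$ (r, k) = 0" using Suc.prems(2,3) k
        by (auto simp: Bi r0_def)
    qed
    then show ?thesis unfolding B_def using A True k r0_def
      by (intro cancel_x_left[of r0 k "- A$$(r0,k)" A]) auto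
  qed
qed

lemma good_pivot:
  assumes k: "k+1<n" and IH: "\<And>B. Good n (k+1) B \<Longrightarrow> B \<in> G"
    and gA: "Good n k A" and i: "k < i" "i < n" "A$$(i,k) \<noteq> 0"
  shows "A \<in> G"
proof -
  define t where "t = (1 - A$$(k,k)) / A$$(i,k)"
  define B where "B = x_mat n k i t * A"
  have A: "A \<in> carrier_mat n n" using gA unfolding Good_def by auto
  have Bi: "r<n \<Longrightarrow> c<n \<Longrightarrow> B $$ (r,c) = A $$ (r,c) + (if r = k then t * A$$(i,c) else 0)" for r c
    unfolding B_def using A i by (simp del: index_mult_mat(1) add: x_mult_index)
  have B: "B \<in> carrier_mat n n" unfolding B_def using A by (auto intro!: mult_carrier_mat)
  have "B \<in> G"
  proof (rule good_col[OF k IH, of _ n])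
    show "Good n k B" unfolding Good_def
    proof (intro conjI allI impI)
      show "det B = 1" using gA A unfolding B_def Good_def using k i by (simp add: det_xA)
    qed (insert gA B k i, auto simp: Bi Good_def)
    show "B $$ (k, k) = 1" using k i by (auto simp: Bi t_def)
  qed auto
  then show ?thesis unfolding B_def using A i k
    by (intro cancel_x_left[of k i t A]) auto
qed

lemma good_step:
  assumes k: "k+1<n" and IH: "\<And>B. Good n (k+1) B \<Longrightarrow> B \<in> G"
    and gA: "Good n k A"
  shows "A \<in> G"
proof (cases "\<exists>i. k < i \<and> i < n \<and> A$$(i,k) \<noteq> 0")
  case True
  then show ?thesis using good_pivot[OF k IH gA] by blast
next
  case False
  have A: "A \<in> carrier_mat n n" and d: "det A = 1" using gA unfolding Good_def by auto
  have Akk: "A$$(k,k) \<noteq> 0"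
  proof
    assume z: "A$$(k,k) = 0"
    have "\<forall>i<n. A $$ (i,k) = 0"
    proof (intro allI impI)
      fix i assume "i < n"
      then show "A $$ (i,k) = 0" using z False gA k unfolding Good_def
        by (cases "i < k"; cases "i = k"; auto)
    qed
    with det_zero_col[OF A, of k] k d show False by simp
  qed
  define B where "B = x_mat n (k+1) k 1 * A"
  have Bi: "r<n \<Longrightarrow> c<n \<Longrightarrow> B $$ (r,c) = A $$ (r,c) + (if r = k+1 then A$$(k,c) else 0)" for r c
    unfolding B_def using A k by (simp del: index_mult_mat(1) add: x_mult_index)
  have B: "B \<in> carrier_mat n n" unfolding B_def using A by (auto intro!: mult_carrier_mat)
  have "B \<in> G"
  proof (rule good_pivot[OF k IH _ _ k])
    show "Good n k B" unfolding Good_def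
    proof (intro conjI allI impI)
      show "det B = 1" using gA A unfolding B_def Good_def using k by (simp add: det_xA)
    qed (insert gA B k, auto simp: Bi Good_def)
    show "B $$ (k + 1, k) \<noteq> 0" using k Akk False by (auto simp: Bi)
  qed auto
  then show ?thesis unfolding B_def using A k
    by (intro cancel_x_left[of "k+1" k 1 A]) auto
qed

lemma good_last:
  assumes n: "0 < n" and gA: "Good n (n-1) A" shows "A \<in> G"
proof -
  have A: "A \<in> carrier_mat n n" and d: "det A = 1" using gA unfolding Good_def by auto
  have ut: "upper_triangular A" using gA A unfolding Good_def upper_triangular_def by auto
  have "det A = prod_list (diag_mat A)" by (rule det_upper_triangular[OF ut A])
  also have "\<dots> = (\<Prod>i\<in>{0..<n}. A $$ (i,i))" using A by (simp add: prod_list_diag_prod)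
  also have "\<dots> = (\<Prod>i\<in>{0..<n}. if i = n-1 then A $$ (n-1,n-1) else 1)"
    by (rule prod.cong, insert gA, auto simp: Good_def)
  also have "\<dots> = A $$ (n-1,n-1)" using n by simp
  finally have "A $$ (n-1,n-1) = 1" using d by simp
  note last = this
  have "A = 1\<^sub>m n"
  proof (rule eq_matI)
    fix i j assume ij: "i < dim_row (1\<^sub>m n :: 'a mat)" "j < dim_col (1\<^sub>m n :: 'a mat)"
    show "A $$ (i,j) = 1\<^sub>m n $$ (i,j)"
    proof (cases "i < n - 1 \<or> j < n - 1")
      case True then show ?thesis using gA ij unfolding Good_def by auto
    next
      case False
      then have "i = n - 1" "j = n - 1" using ij by auto
      then show ?thesis using last ij by simp
    qed
  qed (insert A, auto)
  then show ?thesis using one by simp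
qed

lemma good_all: "k \<le> n - 1 \<Longrightarrow> 0 < n \<Longrightarrow> Good n k A \<Longrightarrow> A \<in> G"
proof (induction "n - 1 - k" arbitrary: k A)
  case 0
  then have "k = n - 1" by simp
  then show ?case using good_last 0 by simp
next
  case (Suc m)
  show ?case
  proof (rule good_step[of k])
    show "k + 1 < n" using Suc by simp
    show "Good n k A" by fact
    fix B :: "'a mat" assume "Good n (k+1) B"
    then show "B \<in> G" using Suc.hyps(1)[of "k+1" B] Suc.hyps(2) Suc.prems by simp
  qed
qed

lemma SL_sub: assumes "0 < n" "A \<in> carrier_mat n n" "det A = 1" shows "A \<in> G"
  by (rule good_all[of 0], insert assms, auto simp: Good_def)

end



definition sg :: "nat \<Rightarrow> nat \<Rightarrow> nat" where "sg n l = (if l = n - 1 then 0 else Suc l)"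
definition pr :: "nat \<Rightarrow> nat \<Rightarrow> nat" where "pr n k = (if k = 0 then n - 1 else k - 1)"
definition sn :: "nat \<Rightarrow> nat \<Rightarrow> 'a::field" where "sn n l = (if l = n - 1 then 1 else -1)"

lemma sg_lt[simp]: "l < n \<Longrightarrow> sg n l < n" unfolding sg_def by auto
lemma pr_lt[simp]: "k < n \<Longrightarrow> pr n k < n" unfolding pr_def by auto
lemma sg_pr_iff: "k < n \<Longrightarrow> l < n \<Longrightarrow> (k = sg n l) = (l = pr n k)"
  unfolding sg_def pr_def by auto
lemma pr_sg[simp]: "l < n \<Longrightarrow> pr n (sg n l) = l" unfolding sg_def pr_def by auto
lemma sg_pr[simp]: "k < n \<Longrightarrow> sg n (pr n k) = k" unfolding sg_def pr_def by auto
lemma sg_inj[simp]: "k < n \<Longrightarrow> l < n \<Longrightarrow> (sg n k = sg n l) = (k = l)" unfolding sg_def by auto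
lemma sn_sq[simp]: "sn n l * sn n l = 1" unfolding sn_def by auto
lemma sn_nz[simp]: "sn n l \<noteq> 0" unfolding sn_def by auto

lemma w_dim[simp]: "dim_row (w_mat n) = n" "dim_col (w_mat n) = n"
  unfolding w_mat_def by auto
lemma w_carrier[simp]: "w_mat n \<in> carrier_mat n n" unfolding carrier_mat_def by simp

lemma w_index: "k < n \<Longrightarrow> l < n \<Longrightarrow> w_mat n $$ (k,l) = (if k = sg n l then sn n l else 0)"
  unfolding w_mat_def sg_def sn_def by auto

lemma mult_w_index:
  assumes B: "B \<in> carrier_mat n n" and r: "r < n" and l: "l < n"
  shows "(B * w_mat n) $$ (r,l) = B $$ (r, sg n l) * sn n l"
proof -
  have "(B * w_mat n) $$ (r,l) = (\<Sum>m\<in>{0..<n}. B $$ (r,m) * w_mat n $$ (m,l))"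
    using B r l by (simp add: scalar_prod_def row_def col_def)
  also have "\<dots> = (\<Sum>m\<in>{0..<n}. if m = sg n l then B $$ (r,m) * sn n l else 0)"
    by (rule sum.cong, auto simp: w_index l)
  also have "\<dots> = B $$ (r, sg n l) * sn n l" using l by simp
  finally show ?thesis .
qed

lemma w_mult_index:
  assumes B: "B \<in> carrier_mat n n" and k: "k < n" and c: "c < n"
  shows "(w_mat n * B) $$ (k,c) = sn n (pr n k) * B $$ (pr n k, c)"
proof -
  have "(w_mat n * B) $$ (k,c) = (\<Sum>m\<in>{0..<n}. w_mat n $$ (k,m) * B $$ (m,c))"
    using B k c by (simp add: scalar_prod_def row_def col_def)
  also have "\<dots> = (\<Sum>m\<in>{0..<n}. if m = pr n k then sn n m * B $$ (m,c) else 0)"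
    by (rule sum.cong, auto simp: w_index k sg_pr_iff)
  also have "\<dots> = sn n (pr n k) * B $$ (pr n k, c)" using k by simp
  finally show ?thesis .
qed

definition dg :: "nat \<Rightarrow> (nat \<Rightarrow> 'a::field) \<Rightarrow> 'a mat" where
  "dg n d = mat n n (\<lambda>(k,l). if k = l then d k else 0)"

lemma dg_dim[simp]: "dim_row (dg n d) = n" "dim_col (dg n d) = n" unfolding dg_def by auto
lemma dg_carrier[simp]: "dg n d \<in> carrier_mat n n" unfolding carrier_mat_def by simp
lemma dg_index: "k < n \<Longrightarrow> l < n \<Longrightarrow> dg n d $$ (k,l) = (if k = l then d k else 0)"
  unfolding dg_def by auto

lemma dg_mult_index:
  assumes B: "B \<in> carrier_mat n n" and k: "k < n" and c: "c < n"
  shows "(dg n d * B) $$ (k,c) = d k * B $$ (k, c)"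
proof -
  have "(dg n d * B) $$ (k,c) = (\<Sum>m\<in>{0..<n}. dg n d $$ (k,m) * B $$ (m,c))"
    using B k c by (simp add: scalar_prod_def row_def col_def)
  also have "\<dots> = (\<Sum>m\<in>{0..<n}. if k = m then d k * B $$ (m,c) else 0)"
    by (rule sum.cong, auto simp: dg_index k)
  also have "\<dots> = d k * B $$ (k, c)" using k by simp
  finally show ?thesis .
qed

lemma mult_dg_index:
  assumes B: "B \<in> carrier_mat n n" and k: "k < n" and c: "c < n"
  shows "(B * dg n d) $$ (k,c) = B $$ (k, c) * d c"
proof -
  have "(B * dg n d) $$ (k,c) = (\<Sum>m\<in>{0..<n}. B $$ (k,m) * dg n d $$ (m,c))"
    using B k c by (simp add: scalar_prod_def row_def col_def)
  also have "\<dots> = (\<Sum>m\<in>{0..<n}. if m = c then B $$ (k,m) * d c else 0)"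
    by (rule sum.cong, auto simp: dg_index c)
  also have "\<dots> = B $$ (k, c) * d c" using c by simp
  finally show ?thesis .
qed

lemma det_dg: "det (dg n d) = (\<Prod>i\<in>{0..<n}. d i)"
proof -
  have "det (dg n d) = prod_list (diag_mat (dg n d))"
    by (rule det_upper_triangular[of _ n], auto simp: upper_triangular_def dg_index)
  also have "\<dots> = (\<Prod>i\<in>{0..<n}. d i)" by (simp add: prod_list_diag_prod dg_index)
  finally show ?thesis .
qed

lemma h_mat_dg: "h_mat n i a = dg n (\<lambda>k. if k = i then a else 1)"
  unfolding h_mat_def dg_def by (rule eq_matI, auto)

lemma dg_dg: "dg n d * dg n e = dg n (\<lambda>k. d k * e k)"
  by (rule eq_matI, auto simp del: index_mult_mat(1) simp: dg_mult_index dg_index)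

lemma x_zero: "x_mat n i j 0 = 1\<^sub>m n"
  by (rule eq_matI, auto simp: x_mat_index)

lemma xx: "i < n \<Longrightarrow> j < n \<Longrightarrow> i \<noteq> j \<Longrightarrow> x_mat n i j a * x_mat n i j b = x_mat n i j (a + b)"
  by (rule eq_matI, auto simp del: index_mult_mat(1) simp: x_mult_index x_mat_index)

lemma wx: "i < n \<Longrightarrow> j < n \<Longrightarrow>
   w_mat n * x_mat n i j a = x_mat n (sg n i) (sg n j) (sn n i * sn n j * a) * w_mat n"
proof (rule eq_matI)
  fix k l assume kl: "k < dim_row (x_mat n (sg n i) (sg n j) (sn n i * sn n j * a) * w_mat n)"
    "l < dim_col (x_mat n (sg n i) (sg n j) (sn n i * sn n j * a) * w_mat n)"
  assume ij: "i < n" "j < n"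
  from kl have k: "k < n" and l: "l < n" by auto
  obtain k' where k': "k' < n" "k = sg n k'" using k by (metis pr_lt sg_pr)
  show "(w_mat n * x_mat n i j a) $$ (k, l) = (x_mat n (sg n i) (sg n j) (sn n i * sn n j * a) * w_mat n) $$ (k, l)"
    unfolding k'(2) using k' l ij
    apply (simp del: index_mult_mat(1) add: w_mult_index mult_w_index x_mat_index)
    apply (cases "k' = l"; cases "k' = i"; cases "l = j"; simp add: algebra_simps)
    done
qed auto

lemma dgx: "i < n \<Longrightarrow> j < n \<Longrightarrow> d j \<noteq> 0 \<Longrightarrow>
   dg n d * x_mat n i j a = x_mat n i j (d i * a / d j) * dg n d"
  by (rule eq_matI, auto simp del: index_mult_mat(1) simp: dg_mult_index mult_dg_index x_mat_index)

lemma dgw: "dg n d * w_mat n = w_mat n * dg n (\<lambda>l. d (sg n l))"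
  by (rule eq_matI, auto simp del: index_mult_mat(1) simp: mult_dg_index mult_w_index dg_index w_index)

lemma x_comm: assumes "i < n" "j < n" "k < n" "i \<noteq> j" "j \<noteq> k" "i \<noteq> k"
  shows "x_mat n i j a * (x_mat n j k 1 * (x_mat n i j (-a) * x_mat n j k (-1))) = x_mat n i k a"
  using assms
  by (intro eq_matI, auto simp del: index_mult_mat(1) simp: x_mult_index x_mat_index mult_carrier_mat[of _ n n _ n])




lemma det_w: assumes n: "0 < n" shows "det (w_mat n :: 'a::field mat) = 1"
proof -
  have "det (w_mat n :: 'a mat) = (\<Sum>j<n. w_mat n $$ (0,j) * cofactor (w_mat n :: 'a mat) 0 j)"
    by (rule laplace_expansion_row, insert n, auto)
  also have "\<dots> = (\<Sum>j<n. if j = n - 1 then cofactor (w_mat n :: 'a mat) 0 (n-1) else 0)"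
    by (rule sum.cong, auto simp: w_index sg_def sn_def n)
  also have "\<dots> = cofactor (w_mat n :: 'a mat) 0 (n-1)" using n by simp
  also have "mat_delete (w_mat n :: 'a mat) 0 (n-1) = dg (n-1) (\<lambda>_. -1)"
    by (rule eq_matI, auto simp: mat_delete_def dg_index w_index sg_def sn_def)
  then have "cofactor (w_mat n :: 'a mat) 0 (n-1) = (-1)^(n-1) * (-1)^(n-1)"
    unfolding cofactor_def by (simp add: det_dg)
  also have "\<dots> = (1::'a)" by (simp add: power_mult_distrib[symmetric])
  finally show ?thesis .
qed

lemma det_h_mat: "i < n \<Longrightarrow> det (h_mat n i a) = a"
  by (simp add: h_mat_dg det_dg)

lemma card_sq:
  shows "card (UNIV :: 'a::{finite,field} set) + 1 \<le> 2 * card (range (\<lambda>x::'a. x^2))"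
proof -
  define S where "S = range (\<lambda>x::'a. x^2)"
  have fS: "finite S" by simp
  have 0: "0 \<in> S" unfolding S_def by (auto intro: range_eqI[of _ _ 0])
  have U: "(UNIV :: 'a set) = (\<Union>s\<in>S. {x. x^2 = s})" unfolding S_def by auto
  have "card (UNIV :: 'a set) \<le> (\<Sum>s\<in>S. card {x::'a. x^2 = s})"
    by (subst U, rule card_UN_le[OF fS])
  also have "\<dots> \<le> (\<Sum>s\<in>S. if s = 0 then 1 else 2)"
  proof (rule sum_mono)
    fix s assume "s \<in> S"
    show "card {x::'a. x^2 = s} \<le> (if s = 0 then 1 else 2)"
    proof (cases "s = 0")
      case True
      then have "{x::'a. x^2 = s} = {0}" by auto
      then show ?thesis using True by simp
    next
      case False
      show ?thesis
      proof (cases "{x::'a. x^2 = s} = {}")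
        case True then show ?thesis by simp
      next
        case F2: False
        then obtain x0 where x0: "x0^2 = s" by auto
        have "{x::'a. x^2 = s} \<subseteq> {x0, -x0}"
        proof
          fix x assume "x \<in> {x::'a. x^2 = s}"
          then have "x^2 = x0^2" using x0 by simp
          then have "(x - x0) * (x + x0) = 0" by (simp add: power2_eq_square algebra_simps)
          then show "x \<in> {x0, -x0}" by (auto simp: add_eq_0_iff)
        qed
        then have "card {x::'a. x^2 = s} \<le> card {x0, -x0}" by (intro card_mono) auto
        also have "\<dots> \<le> 2" by (simp add: card_insert_le_m1)
        finally show ?thesis using False by simp
      qed
    qed
  qed
  also have "\<dots> = 1 + (\<Sum>s\<in>S - {0}. if s = 0 then 1 else 2)"
    by (subst sum.remove[OF fS 0], simp)
  also have "\<dots> = 1 + 2 * card (S - {0})" by simp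
  also have "card (S - {0}) = card S - 1" using 0 fS by (simp add: card_Diff_singleton)
  finally have le: "card (UNIV :: 'a set) \<le> 1 + 2 * (card S - 1)" .
  have "card S \<ge> 1" using 0 fS by (metis One_nat_def Suc_leI card_gt_0_iff empty_iff)
  with le have "card (UNIV :: 'a set) + 1 \<le> 2 * card S" by linarith
  then show ?thesis unfolding S_def .
qed

lemma two_sq: "\<exists>x y. (a::'a::{finite,field}) = x^2 + y^2"
proof -
  define S where "S = range (\<lambda>x::'a. x^2)"
  define T where "T = (\<lambda>s. a - s) ` S"
  have cT: "card T = card S" unfolding T_def by (rule card_image, rule inj_onI, simp)
  have "S \<inter> T \<noteq> {}"
  proof
    assume e: "S \<inter> T = {}"
    have "card (S \<union> T) = card S + card T" by (rule card_Un_disjoint, auto simp: e)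
    also have "\<dots> > card (UNIV :: 'a set)" using card_sq[where 'a='a] cT unfolding S_def by simp
    finally show False using card_mono[of UNIV "S \<union> T"] by simp
  qed
  then obtain s where "s \<in> S" "s \<in> T" by blast
  then obtain x y where "s = x^2" "s = a - y^2" unfolding S_def T_def by blast
  then show ?thesis by (intro exI[of _ x] exI[of _ y]) (auto simp: algebra_simps)
qed

lemma gen_carrier: assumes S: "S \<subseteq> carrier_mat n n"
  shows "A \<in> gen_mat n S \<Longrightarrow> A \<in> carrier_mat n n"
  by (induction rule: gen_mat.induct, insert S, auto)

lemma gen_mult_closed: assumes S: "S \<subseteq> carrier_mat n n" and A: "A \<in> gen_mat n S"
  shows "B \<in> gen_mat n S \<Longrightarrow> A * B \<in> gen_mat n S"
proof (induction rule: gen_mat.induct)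
  case gen_one
  then show ?case using A gen_carrier[OF S A] by simp
next
  case (gen_mult B s)
  have "A * (B * s) = (A * B) * s" using gen_carrier[OF S A] gen_carrier[OF S gen_mult(1)] gen_mult(2) S
    by (subst assoc_mult_mat[of _ n n _ n _ n]) auto
  then show ?case using gen_mat.gen_mult[OF gen_mult(3) gen_mult(2)] by simp
next
  case (gen_mult_inv B s C)
  have "A * (B * C) = (A * B) * C" using gen_carrier[OF S A] gen_carrier[OF S gen_mult_inv(1)] gen_mult_inv(3)
    by (subst assoc_mult_mat[of _ n n _ n _ n]) auto
  then show ?case using gen_mat.gen_mult_inv[OF gen_mult_inv(6) gen_mult_inv(2-5)] by simp
qed

lemma gen_S: "S \<subseteq> carrier_mat n n \<Longrightarrow> s \<in> S \<Longrightarrow> s \<in> gen_mat n S"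
  using gen_mat.gen_mult[OF gen_mat.gen_one[of n S], of s] by auto

lemma gen_inv_closed:
  assumes S: "S \<subseteq> carrier_mat n n"
    and inv: "\<And>s. s \<in> S \<Longrightarrow> \<exists>C \<in> carrier_mat n n. s * C = 1\<^sub>m n \<and> C * s = 1\<^sub>m n"
  shows "A \<in> gen_mat n S \<Longrightarrow> \<exists>A' \<in> gen_mat n S. A * A' = 1\<^sub>m n \<and> A' * A = 1\<^sub>m n"
proof (induction rule: gen_mat.induct)
  case gen_one
  then show ?case by (intro bexI[of _ "1\<^sub>m n"]) (auto intro: gen_mat.gen_one)
next
  case (gen_mult A s)
  from gen_mult.IH obtain A' where A': "A' \<in> gen_mat n S" "A * A' = 1\<^sub>m n" "A' * A = 1\<^sub>m n" by blast
  from inv[OF gen_mult(2)] obtain C where C: "C \<in> carrier_mat n n" "s * C = 1\<^sub>m n" "C * s = 1\<^sub>m n" by blast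
  have CG: "C \<in> gen_mat n S"
    using gen_mat.gen_mult_inv[OF gen_mat.gen_one gen_mult(2) C] C(1) by simp
  have A: "A \<in> carrier_mat n n" using gen_carrier[OF S gen_mult(1)] .
  have A'c: "A' \<in> carrier_mat n n" using gen_carrier[OF S A'(1)] .
  have s: "s \<in> carrier_mat n n" using S gen_mult(2) by auto
  show ?case
  proof (intro bexI[of _ "C * A'"] conjI)
    show "C * A' \<in> gen_mat n S" by (rule gen_mult_closed[OF S CG A'(1)])
    have "A * s * (C * A') = A * ((s * C) * A')" using A s C(1) A'c
      by (simp add: assoc_mult_mat[of _ n n _ n _ n] mult_carrier_mat[of _ n n _ n])
    then show "A * s * (C * A') = 1\<^sub>m n" using C(2) A'(2) A'c by simp
    have "C * A' * (A * s) = C * ((A' * A) * s)" using A s C(1) A'c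
      by (simp add: assoc_mult_mat[of _ n n _ n _ n] mult_carrier_mat[of _ n n _ n])
    then show "C * A' * (A * s) = 1\<^sub>m n" using C(3) A'(3) s by simp
  qed
next
  case (gen_mult_inv A s C)
  from gen_mult_inv.IH obtain A' where A': "A' \<in> gen_mat n S" "A * A' = 1\<^sub>m n" "A' * A = 1\<^sub>m n" by blast
  have sG: "s \<in> gen_mat n S" using gen_S[OF S gen_mult_inv(2)] .
  have A: "A \<in> carrier_mat n n" using gen_carrier[OF S gen_mult_inv(1)] .
  have A'c: "A' \<in> carrier_mat n n" using gen_carrier[OF S A'(1)] .
  have s: "s \<in> carrier_mat n n" using S gen_mult_inv(2) by auto
  have C: "C \<in> carrier_mat n n" by fact
  show ?case
  proof (intro bexI[of _ "s * A'"] conjI)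
    show "s * A' \<in> gen_mat n S" by (rule gen_mult_closed[OF S sG A'(1)])
    have "A * C * (s * A') = A * ((C * s) * A')" using A s C A'c
      by (simp add: assoc_mult_mat[of _ n n _ n _ n] mult_carrier_mat[of _ n n _ n])
    then show "A * C * (s * A') = 1\<^sub>m n" using gen_mult_inv(5) A'(2) A'c by simp
    have "s * A' * (A * C) = s * ((A' * A) * C)" using A s C A'c
      by (simp add: assoc_mult_mat[of _ n n _ n _ n] mult_carrier_mat[of _ n n _ n])
    then show "s * A' * (A * C) = 1\<^sub>m n" using gen_mult_inv(4) A'(3) C by simp
  qed
qed

lemma gen_SL:
  assumes S: "S \<subseteq> SL n"
  shows "A \<in> gen_mat n S \<Longrightarrow> A \<in> SL n"
proof (induction rule: gen_mat.induct)
  case gen_one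
  then show ?case by (simp add: SL_def)
next
  case (gen_mult A s)
  then show ?case using S by (auto simp: SL_def det_mult)
next
  case (gen_mult_inv A s C)
  have "det s * det C = 1" using det_mult[of s n C] gen_mult_inv S by (auto simp: SL_def)
  then have "det C = 1" using gen_mult_inv S by (auto simp: SL_def)
  then show ?case using gen_mult_inv S by (auto simp: SL_def det_mult)
qed

lemma det_inv_exists: assumes A: "(A::'a::field mat) \<in> carrier_mat n n" and d: "det A \<noteq> 0"
  shows "\<exists>C \<in> carrier_mat n n. A * C = 1\<^sub>m n \<and> C * A = 1\<^sub>m n"
  using det_non_zero_imp_unit[OF A d, of undefined] unfolding Units_def
  by (auto simp: ring_mat_simps)




definition hdg :: "'a::field \<Rightarrow> nat \<Rightarrow> 'a" where
  "hdg \<xi> k = (if k = 0 then \<xi> else if k = 1 then inverse \<xi> else 1)"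

lemma dg_one: "dg n (\<lambda>_. 1) = 1\<^sub>m n" by (rule eq_matI, auto simp: dg_index)

lemma assoc_n: "A \<in> carrier_mat n n \<Longrightarrow> B \<in> carrier_mat n n \<Longrightarrow> C \<in> carrier_mat n n \<Longrightarrow>
   A * B * C = A * (B * C)" by (rule assoc_mult_mat)

lemma mod_ne: assumes "(i::nat) < n" "0 < d" "d < n" shows "(i + d) mod n \<noteq> i"
proof (cases "i + d < n")
  case True
  then have "(i + d) mod n = i + d" by simp
  then show ?thesis using assms by simp
next
  case False
  then have "(i + d) mod n = (i + d - n) mod n" by (simp add: le_mod_geq)
  also have "\<dots> = i + d - n" using assms by simp
  finally show ?thesis using assms False by simp
qed

lemma sg_mod: "i < n \<Longrightarrow> sg n i = Suc i mod n"
  unfolding sg_def by (auto simp: mod_if)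

context
  fixes G :: "'a::{finite,field} mat set" and n :: nat and \<xi> :: 'a
  assumes n2: "2 \<le> n"
  and sub: "G \<subseteq> carrier_mat n n"
  and one: "1\<^sub>m n \<in> G"
  and mult: "\<And>A B. A \<in> G \<Longrightarrow> B \<in> G \<Longrightarrow> A * B \<in> G"
  and cl: "\<And>B C. B \<in> G \<Longrightarrow> B * C \<in> G \<Longrightarrow> C \<in> carrier_mat n n \<Longrightarrow> C \<in> G"
  and cr: "\<And>B C. B \<in> G \<Longrightarrow> C * B \<in> G \<Longrightarrow> C \<in> carrier_mat n n \<Longrightarrow> C \<in> G"
  and hG: "dg n (hdg \<xi>) \<in> G"
  and uG: "x_mat n 0 1 1 * w_mat n \<in> G"
  and xi0: "\<xi> \<noteq> 0" and xi2: "\<xi>^2 \<noteq> 1"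
  and gen: "\<And>y. y \<noteq> 0 \<Longrightarrow> \<exists>k. y = \<xi>^k"
begin

lemma hd_nz[simp]: "hdg \<xi> k \<noteq> 0" unfolding hdg_def using xi0 by auto
lemma hd0[simp]: "hdg \<xi> 0 = \<xi>" unfolding hdg_def by simp
lemma hd1[simp]: "hdg \<xi> (Suc 0) = inverse \<xi>" unfolding hdg_def by simp
lemma hd_last: "hdg \<xi> (n - Suc 0) = (if n = 2 then inverse \<xi> else 1)"
  unfolding hdg_def using n2 by auto
lemma sg_last[simp]: "sg n (n - Suc 0) = 0" unfolding sg_def by simp
lemma sg0[simp]: "sg n 0 = Suc 0" unfolding sg_def using n2 by simp
lemma sn_last[simp]: "sn n (n - Suc 0) = 1" unfolding sn_def by simp
lemma sn0[simp]: "sn n 0 = -1" unfolding sn_def using n2 by simp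
lemma n1: "n - 1 < n" "0 < n" "1 < n" "n - 1 \<noteq> 0" using n2 by auto

lemma hiG: "dg n (\<lambda>k. inverse (hdg \<xi> k)) \<in> G"
proof (rule cl[OF hG])
  have "dg n (hdg \<xi>) * dg n (\<lambda>k. inverse (hdg \<xi> k)) = dg n (\<lambda>_. 1)" using xi0 by (simp add: dg_dg)
  then show "dg n (hdg \<xi>) * dg n (\<lambda>k. inverse (hdg \<xi> k)) \<in> G" using one by (simp add: dg_one)
qed simp

definition "cc = 1 - \<xi>^2"
definition "Dp k = hdg \<xi> (sg n k) / hdg \<xi> k"
definition "rho = hdg \<xi> (n - 1) / \<xi>"
definition "gg = x_mat n (n-1) 0 cc * dg n Dp"

lemma Dp_hd: "(\<lambda>k. Dp k * hdg \<xi> k) = (\<lambda>l. hdg \<xi> (sg n l))"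
  unfolding Dp_def by auto

lemma stepA1: "dg n (hdg \<xi>) * (x_mat n 0 1 1 * w_mat n) = x_mat n 0 1 (\<xi>^2) * (w_mat n * dg n (\<lambda>l. hdg \<xi> (sg n l)))"
proof -
  have "dg n (hdg \<xi>) * (x_mat n 0 1 1 * w_mat n) = (dg n (hdg \<xi>) * x_mat n 0 1 1) * w_mat n"
    by (rule assoc_n[symmetric], auto)
  also have "dg n (hdg \<xi>) * x_mat n 0 1 1 = x_mat n 0 1 (hdg \<xi> 0 * 1 / hdg \<xi> 1) * dg n (hdg \<xi>)"
    by (rule dgx, insert n1 xi0, auto)
  also have "hdg \<xi> 0 * 1 / hdg \<xi> 1 = \<xi>^2" by (simp add: power2_eq_square divide_inverse)
  also have "x_mat n 0 1 (\<xi>^2) * dg n (hdg \<xi>) * w_mat n = x_mat n 0 1 (\<xi>^2) * (dg n (hdg \<xi>) * w_mat n)"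
    by (rule assoc_n, auto)
  also have "dg n (hdg \<xi>) * w_mat n = w_mat n * dg n (\<lambda>l. hdg \<xi> (sg n l))" by (rule dgw)
  finally show ?thesis .
qed

lemma stepA2: "(x_mat n 0 1 1 * w_mat n) * (gg * dg n (hdg \<xi>)) = x_mat n 0 1 (\<xi>^2) * (w_mat n * dg n (\<lambda>l. hdg \<xi> (sg n l)))"
proof -
  have "gg * dg n (hdg \<xi>) = x_mat n (n-1) 0 cc * dg n (\<lambda>k. Dp k * hdg \<xi> k)"
    unfolding gg_def by (subst assoc_n, auto simp: dg_dg)
  also have "\<dots> = x_mat n (n-1) 0 cc * dg n (\<lambda>l. hdg \<xi> (sg n l))" by (simp add: Dp_hd)
  finally have e: "gg * dg n (hdg \<xi>) = \<dots>" .
  have "(x_mat n 0 1 1 * w_mat n) * (x_mat n (n-1) 0 cc * dg n (\<lambda>l. hdg \<xi> (sg n l)))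
     = x_mat n 0 1 1 * (w_mat n * (x_mat n (n-1) 0 cc * dg n (\<lambda>l. hdg \<xi> (sg n l))))"
    by (rule assoc_n, auto)
  also have "w_mat n * (x_mat n (n-1) 0 cc * dg n (\<lambda>l. hdg \<xi> (sg n l)))
     = (w_mat n * x_mat n (n-1) 0 cc) * dg n (\<lambda>l. hdg \<xi> (sg n l))"
    by (rule assoc_n[symmetric], auto)
  also have "w_mat n * x_mat n (n-1) 0 cc = x_mat n 0 1 (- cc) * w_mat n"
    using wx[of "n-1" n 0 cc] n1 by simp
  also have "x_mat n 0 1 (- cc) * w_mat n * dg n (\<lambda>l. hdg \<xi> (sg n l))
      = x_mat n 0 1 (- cc) * (w_mat n * dg n (\<lambda>l. hdg \<xi> (sg n l)))"
    by (rule assoc_n, auto)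
  also have "x_mat n 0 1 1 * (x_mat n 0 1 (- cc) * (w_mat n * dg n (\<lambda>l. hdg \<xi> (sg n l))))
     = (x_mat n 0 1 1 * x_mat n 0 1 (- cc)) * (w_mat n * dg n (\<lambda>l. hdg \<xi> (sg n l)))"
    by (rule assoc_n[symmetric], auto)
  also have "x_mat n 0 1 1 * x_mat n 0 1 (- cc) = x_mat n 0 1 (\<xi>^2)"
    using xx[of 0 n 1 1 "-cc"] n1 unfolding cc_def by simp
  finally show ?thesis using e by simp
qed

lemma ggG: "gg \<in> G"
proof -
  have "(x_mat n 0 1 1 * w_mat n) * (gg * dg n (hdg \<xi>)) \<in> G"
    using stepA1 stepA2 mult[OF hG uG] by simp
  then have "gg * dg n (hdg \<xi>) \<in> G" by (rule cl[OF uG], auto simp: gg_def intro!: mult_carrier_mat)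
  then show ?thesis by (rule cr[OF hG], auto simp: gg_def intro!: mult_carrier_mat)
qed

lemma rho_ne1: "rho \<noteq> 1"
proof
  assume r: "rho = 1"
  show False
  proof (cases "n = 2")
    case True
    then have "inverse \<xi> / \<xi> = 1" using r unfolding rho_def by (simp add: hd_last)
    then have "\<xi>^2 = 1" using xi0 by (simp add: field_simps power2_eq_square hd_last)
    then show False using xi2 by simp
  next
    case False
    then have "1 / \<xi> = 1" using r n2 unfolding rho_def by (simp add: hd_last)
    then have "\<xi> = 1" using xi0 by (simp add: field_simps)
    then show False using xi2 by simp
  qed
qed

definition "c1 = cc * (1 - rho)"

lemma c1_nz: "c1 \<noteq> 0"
  unfolding c1_def cc_def using xi2 rho_ne1 by auto

lemma XG0: "x_mat n (n-1) 0 c1 \<in> G"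
proof -
  have gH: "gg * dg n (hdg \<xi>) = x_mat n (n-1) 0 cc * dg n (\<lambda>k. Dp k * hdg \<xi> k)"
    unfolding gg_def by (subst assoc_n, auto simp: dg_dg)
  have "dg n (hdg \<xi>) * gg = (dg n (hdg \<xi>) * x_mat n (n-1) 0 cc) * dg n Dp"
    unfolding gg_def by (rule assoc_n[symmetric], auto)
  also have "dg n (hdg \<xi>) * x_mat n (n-1) 0 cc = x_mat n (n-1) 0 (rho * cc) * dg n (hdg \<xi>)"
  proof -
    have co: "hdg \<xi> (n-1) * cc / hdg \<xi> 0 = rho * cc" unfolding rho_def by simp
    show ?thesis using dgx[of "n-1" n 0 "hdg \<xi>" cc] n1 xi0 unfolding co by simp
  qed
  also have "x_mat n (n-1) 0 (rho * cc) * dg n (hdg \<xi>) * dg n Dp = x_mat n (n-1) 0 (rho * cc) * dg n (\<lambda>k. Dp k * hdg \<xi> k)"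
    by (subst assoc_n, auto simp: dg_dg mult.commute)
  finally have Hg: "dg n (hdg \<xi>) * gg = \<dots>" .
  have "x_mat n (n-1) 0 c1 * (dg n (hdg \<xi>) * gg) = (x_mat n (n-1) 0 c1 * x_mat n (n-1) 0 (rho * cc)) * dg n (\<lambda>k. Dp k * hdg \<xi> k)"
    unfolding Hg by (rule assoc_n[symmetric], auto)
  also have "x_mat n (n-1) 0 c1 * x_mat n (n-1) 0 (rho * cc) = x_mat n (n-1) 0 cc"
    using xx[of "n-1" n 0 c1 "rho * cc"] n1 unfolding c1_def by (simp add: algebra_simps)
  finally have "x_mat n (n-1) 0 c1 * (dg n (hdg \<xi>) * gg) = gg * dg n (hdg \<xi>)" using gH by simp
  then have "x_mat n (n-1) 0 c1 * (dg n (hdg \<xi>) * gg) \<in> G" using mult[OF ggG hG] by simp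
  then show ?thesis by (rule cr[OF mult[OF hG ggG]], simp)
qed

lemma XG_pow: "x_mat n (n-1) 0 (c1 * (\<xi> / hdg \<xi> (n-1))^k) \<in> G"
proof (induction k)
  case 0
  then show ?case using XG0 by simp
next
  case (Suc k)
  define a where "a = c1 * (\<xi> / hdg \<xi> (n-1))^k"
  have co: "inverse (hdg \<xi> (n-1)) * a / inverse (hdg \<xi> 0) = a * (\<xi> / hdg \<xi> (n-1))"
    using xi0 by (simp add: field_simps)
  have "dg n (\<lambda>k. inverse (hdg \<xi> k)) * x_mat n (n-1) 0 a = x_mat n (n-1) 0 (a * (\<xi> / hdg \<xi> (n-1))) * dg n (\<lambda>k. inverse (hdg \<xi> k))"
    using dgx[of "n-1" n 0 "\<lambda>k. inverse (hdg \<xi> k)" a] n1 xi0 unfolding co by simp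
  then have "x_mat n (n-1) 0 (a * (\<xi> / hdg \<xi> (n-1))) * dg n (\<lambda>k. inverse (hdg \<xi> k)) \<in> G"
    using mult[OF hiG Suc.IH[folded a_def]] by simp
  then have "x_mat n (n-1) 0 (a * (\<xi> / hdg \<xi> (n-1))) \<in> G" by (rule cr[OF hiG], simp)
  moreover have "a * (\<xi> / hdg \<xi> (n-1)) = c1 * (\<xi> / hdg \<xi> (n-1))^(Suc k)" unfolding a_def by (simp only: power_Suc2 mult.assoc)
  ultimately show ?case by metis
qed

lemma XG_sq: "x_mat n (n-1) 0 (c1 * y^2) \<in> G"
proof (cases "y = 0")
  case True
  then show ?thesis using one by (simp add: x_zero)
next
  case False
  obtain k where k: "y = \<xi>^k" using gen[OF False] by blast
  show ?thesis
  proof (cases "n = 2")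
    case True
    have "\<xi> / hdg \<xi> (n-1) = \<xi>^2" using True xi0 by (simp add: field_simps power2_eq_square hd_last)
    then show ?thesis using XG_pow[of k] k by (simp add: power_mult[symmetric] mult.commute)
  next
    case False
    have "\<xi> / hdg \<xi> (n-1) = \<xi>" using False n2 by (simp add: hd_last)
    then show ?thesis using XG_pow[of "2*k"] k by (simp add: power_mult[symmetric] mult.commute)
  qed
qed

lemma XG: "x_mat n (n-1) 0 a \<in> G"
proof -
  obtain x y where xy: "a / c1 = x^2 + y^2" using two_sq by blast
  have "a = c1 * x^2 + c1 * y^2" using xy c1_nz by (simp add: field_simps)
  then have "x_mat n (n-1) 0 a = x_mat n (n-1) 0 (c1 * x^2) * x_mat n (n-1) 0 (c1 * y^2)"
    using xx[of "n-1" n 0 "c1*x^2" "c1*y^2"] n1 by simp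
  then show ?thesis using mult[OF XG_sq XG_sq] by simp
qed

lemma YG: "x_mat n 0 1 b \<in> G"
proof -
  have "(x_mat n 0 1 1 * w_mat n) * x_mat n (n-1) 0 (-b) = x_mat n 0 1 1 * (w_mat n * x_mat n (n-1) 0 (-b))"
    by (rule assoc_n, auto)
  also have "w_mat n * x_mat n (n-1) 0 (-b) = x_mat n 0 1 b * w_mat n"
    using wx[of "n-1" n 0 "-b"] n1 by simp
  also have "x_mat n 0 1 1 * (x_mat n 0 1 b * w_mat n) = (x_mat n 0 1 1 * x_mat n 0 1 b) * w_mat n"
    by (rule assoc_n[symmetric], auto)
  also have "x_mat n 0 1 1 * x_mat n 0 1 b = x_mat n 0 1 b * x_mat n 0 1 1"
    using xx[of 0 n 1 1 b] xx[of 0 n 1 b 1] n1 by (simp add: add.commute)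
  also have "x_mat n 0 1 b * x_mat n 0 1 1 * w_mat n = x_mat n 0 1 b * (x_mat n 0 1 1 * w_mat n)"
    by (rule assoc_n, auto)
  finally have "x_mat n 0 1 b * (x_mat n 0 1 1 * w_mat n) \<in> G" using mult[OF uG XG] by metis
  then show ?thesis by (rule cr[OF uG], simp)
qed

lemma WG: "w_mat n \<in> G"
proof -
  have "x_mat n 0 1 (-1) * (x_mat n 0 1 1 * w_mat n) = (x_mat n 0 1 (-1) * x_mat n 0 1 1) * w_mat n"
    by (rule assoc_n[symmetric], auto)
  also have "x_mat n 0 1 (-1) * x_mat n 0 1 1 = 1\<^sub>m n" using xx[of 0 n 1 "-1" 1] n1 by (simp add: x_zero)
  also have "1\<^sub>m n * w_mat n = w_mat n" by simp
  finally show ?thesis using mult[OF YG uG] by metis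
qed

lemma cycG: "i < n \<Longrightarrow> x_mat n i (sg n i) a \<in> G"
proof (induction i arbitrary: a)
  case 0
  then show ?case using YG by simp
next
  case (Suc i)
  have i1: "i < n" using Suc.prems by simp
  have i2: "sg n i = Suc i" using Suc.prems unfolding sg_def by simp
  note i = i1 i2
  define b where "b = a * sn n i * sn n (sg n i)"
  have "w_mat n * x_mat n i (sg n i) b = x_mat n (sg n i) (sg n (sg n i)) (sn n i * sn n (sg n i) * b) * w_mat n"
    by (rule wx, insert i Suc.prems, auto)
  also have "sn n i * sn n (sg n i) * b = a" unfolding b_def
    by (metis (no_types, lifting) mult.assoc mult.commute mult_1 sn_sq)
  finally have "x_mat n (Suc i) (sg n (Suc i)) a * w_mat n \<in> G" using mult[OF WG Suc.IH[OF i(1), of b]] i Suc.prems by simp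
  then show ?case by (rule cr[OF WG], simp)
qed

lemma distG: "0 < d \<Longrightarrow> d < n \<Longrightarrow> i < n \<Longrightarrow> x_mat n i ((i + d) mod n) a \<in> G"
proof (induction d arbitrary: i a)
  case 0
  then show ?case by simp
next
  case (Suc d)
  show ?case
  proof (cases "d = 0")
    case True
    then show ?thesis using cycG[OF Suc.prems(3)] Suc.prems by (simp add: sg_mod)
  next
    case False
    define j where "j = (i + d) mod n"
    define k where "k = (i + Suc d) mod n"
    have j: "j < n" "k < n" unfolding j_def k_def using n1 by auto
    have kj: "k = sg n j" unfolding k_def j_def using j by (simp add: sg_mod mod_Suc_eq)
    have ij: "i \<noteq> j" unfolding j_def using mod_ne[of i n d] Suc False by auto
    have ik: "i \<noteq> k" unfolding k_def using mod_ne[of i n "Suc d"] Suc by auto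
    have jk: "j \<noteq> k" unfolding kj using j n2 by (auto simp: sg_def)
    have "x_mat n i j a * (x_mat n j k 1 * (x_mat n i j (-a) * x_mat n j k (-1))) \<in> G"
      using Suc.IH[of i] False Suc.prems cycG[OF j(1)] kj unfolding j_def
      by (intro mult, auto)
    then show ?thesis using x_comm[of i n j k a] j ij ik jk Suc.prems unfolding k_def by simp
  qed
qed

lemma allG: "i < n \<Longrightarrow> j < n \<Longrightarrow> i \<noteq> j \<Longrightarrow> x_mat n i j a \<in> G"
proof -
  assume ij: "i < n" "j < n" "i \<noteq> j"
  define d where "d = (if i < j then j - i else j + n - i)"
  have d: "0 < d" "d < n" "(i + d) mod n = j" unfolding d_def using ij n2
    by (auto simp: mod_if)
  show ?thesis using distG[OF d(1,2) ij(1), of a] d(3) by simp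
qed

end



lemma xi2_ne:
  fixes \<xi> :: "'a::{finite,field}"
  assumes c: "card (UNIV :: 'a set) > 3"
    and gen: "\<forall>y::'a. y \<noteq> 0 \<longrightarrow> (\<exists>k::nat. y = \<xi> ^ k)"
  shows "\<xi>^2 \<noteq> 1"
proof
  assume x2: "\<xi>^2 = 1"
  have "(UNIV :: 'a set) \<subseteq> {0, 1, \<xi>}"
  proof
    fix y :: 'a
    show "y \<in> {0, 1, \<xi>}"
    proof (cases "y = 0")
      case False
      then obtain k where k: "y = \<xi>^k" using gen by blast
      have "\<xi>^k = \<xi>^(2 * (k div 2) + k mod 2)" by simp
      also have "\<dots> = (\<xi>^2)^(k div 2) * \<xi>^(k mod 2)" by (simp only: power_add power_mult)
      also have "\<dots> = \<xi>^(k mod 2)" using x2 by simp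
      finally have "y = \<xi>^(k mod 2)" using k by simp
      moreover have "k mod 2 = 0 \<or> k mod 2 = 1" by auto
      ultimately show ?thesis by auto
    qed simp
  qed
  then have "card (UNIV :: 'a set) \<le> card {0, 1, \<xi>}" by (intro card_mono) auto
  also have "\<dots> \<le> 3" by (simp add: card_insert_if)
  finally show False using c by simp
qed

theorem mainTheorem2:
  fixes \<xi> :: "'a::{finite,field}" and n :: nat
  assumes "n \<ge> 2"
    and "card (UNIV :: 'a set) > 3"
    and "\<xi> \<noteq> 0" and "\<forall>y::'a. y \<noteq> 0 \<longrightarrow> (\<exists>k::nat. y = \<xi> ^ k)"
  shows "gen_mat n {h_mat n 0 \<xi> * h_mat n 1 (inverse \<xi>), x_mat n 0 1 1 * w_mat n} = SL n"
proof -
  note n2 = assms(1) and xi0 = assms(3)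
  define S where "S = {h_mat n 0 \<xi> * h_mat n 1 (inverse \<xi>), x_mat n 0 1 1 * w_mat n}"
  define G where "G = gen_mat n S"
  have hp: "h_mat n 0 \<xi> * h_mat n 1 (inverse \<xi>) = dg n (hdg \<xi>)"
    unfolding h_mat_dg dg_dg by (rule arg_cong[where f = "dg n"], auto simp: hdg_def)
  have Sc: "S \<subseteq> carrier_mat n n" unfolding S_def hp by auto
  have SSL: "S \<subseteq> SL n"
  proof -
    have "det (h_mat n 0 \<xi> * h_mat n 1 (inverse \<xi>)) = det (h_mat n 0 \<xi>) * det (h_mat n 1 (inverse \<xi>))"
      by (rule det_mult[of _ n], auto simp: h_mat_dg)
    also have "\<dots> = 1" using n2 xi0 by (simp add: det_h_mat)
    finally have 1: "det (h_mat n 0 \<xi> * h_mat n 1 (inverse \<xi>)) = 1" .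
    have "det (x_mat n 0 1 1 * w_mat n :: 'a mat) = det (x_mat n 0 1 1) * det (w_mat n :: 'a mat)"
      by (rule det_mult[of _ n], auto)
    also have "\<dots> = 1" using n2 by (simp add: det_x_mat det_w)
    finally have 2: "det (x_mat n 0 1 1 * w_mat n :: 'a mat) = 1" .
    show ?thesis using Sc 1 2 unfolding S_def SL_def by auto
  qed
  have inv: "\<And>s. s \<in> S \<Longrightarrow> \<exists>C \<in> carrier_mat n n. s * C = 1\<^sub>m n \<and> C * s = 1\<^sub>m n"
    using SSL by (intro det_inv_exists, auto simp: SL_def)
  have sub: "G \<subseteq> carrier_mat n n" unfolding G_def using gen_carrier[OF Sc] by auto
  have one: "1\<^sub>m n \<in> G" unfolding G_def by (rule gen_mat.gen_one)
  have mult: "\<And>A B. A \<in> G \<Longrightarrow> B \<in> G \<Longrightarrow> A * B \<in> G" unfolding G_def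
    by (rule gen_mult_closed[OF Sc])
  have invG: "\<And>A. A \<in> G \<Longrightarrow> \<exists>A' \<in> G. A * A' = 1\<^sub>m n \<and> A' * A = 1\<^sub>m n"
    unfolding G_def by (rule gen_inv_closed[OF Sc inv])
  have cl: "\<And>B C. B \<in> G \<Longrightarrow> B * C \<in> G \<Longrightarrow> C \<in> carrier_mat n n \<Longrightarrow> C \<in> G"
  proof -
    fix B C assume B: "B \<in> G" and BC: "B * C \<in> G" and C: "C \<in> carrier_mat n n"
    obtain B' where B': "B' \<in> G" "B' * B = 1\<^sub>m n" using invG[OF B] by blast
    have "B' * (B * C) = (B' * B) * C" using B B' C sub by (subst assoc_n, auto)
    then have "B' * (B * C) = C" using B'(2) C by simp
    then show "C \<in> G" using mult[OF B'(1) BC] by simp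
  qed
  have cr: "\<And>B C. B \<in> G \<Longrightarrow> C * B \<in> G \<Longrightarrow> C \<in> carrier_mat n n \<Longrightarrow> C \<in> G"
  proof -
    fix B C assume B: "B \<in> G" and BC: "C * B \<in> G" and C: "C \<in> carrier_mat n n"
    obtain B' where B': "B' \<in> G" "B * B' = 1\<^sub>m n" using invG[OF B] by blast
    have "(C * B) * B' = C * (B * B')" using B B' C sub by (subst assoc_n, auto)
    then have "(C * B) * B' = C" using B'(2) C by simp
    then show "C \<in> G" using mult[OF BC B'(1)] by simp
  qed
  have hG: "dg n (hdg \<xi>) \<in> G" unfolding G_def using gen_S[OF Sc, of "dg n (hdg \<xi>)"] hp S_def by auto
  have uG: "x_mat n 0 1 1 * w_mat n \<in> G" unfolding G_def using gen_S[OF Sc] S_def by auto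
  have xi2: "\<xi>^2 \<noteq> 1" by (rule xi2_ne[OF assms(2,4)])
  have gen: "\<And>y. y \<noteq> 0 \<Longrightarrow> \<exists>k. y = \<xi>^k" using assms(4) by blast
  have xs: "\<And>i j a. i < n \<Longrightarrow> j < n \<Longrightarrow> i \<noteq> j \<Longrightarrow> x_mat n i j a \<in> G"
    by (rule allG[OF n2 sub one mult cl cr hG uG xi0 xi2 gen])
  show ?thesis
  proof
    show "gen_mat n {h_mat n 0 \<xi> * h_mat n 1 (inverse \<xi>), x_mat n 0 1 1 * w_mat n} \<subseteq> SL n"
      using gen_SL[OF SSL] unfolding S_def by auto
    show "SL n \<subseteq> gen_mat n {h_mat n 0 \<xi> * h_mat n 1 (inverse \<xi>), x_mat n 0 1 1 * w_mat n}"
    proof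
      fix A assume "A \<in> (SL n :: 'a mat set)"
      then have A: "A \<in> carrier_mat n n" "det A = 1" unfolding SL_def by auto
      have "A \<in> G" by (rule SL_sub[OF sub one mult xs _ A], insert n2, auto)
      then show "A \<in> gen_mat n {h_mat n 0 \<xi> * h_mat n 1 (inverse \<xi>), x_mat n 0 1 1 * w_mat n}"
        unfolding G_def S_def .
    qed
  qed
qed


end
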